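(* Let $G\subset\mathrm{SU}(2)$ be a finite nontrivial subgroup, $H=P(G)$, and let $f$ be an $H$-invariant Morse–Smale function on $S^2$ whose critical set equals the fixed-point set $\mathrm{Fix}(H)=\{p\in S^2: |H_p|>1\}$. Let $\varepsilon>0$ be small, $p$ a critical point of $f$, and $\gamma_p$ the embedded Reeb orbit of $\lambda_\varepsilon$ over $p$ (namely $t\mapsto e^{it/(1+\varepsilon f(p))}z$, $t\in[0,2\pi(1+\varepsilon f(p))]$, $z\in\mathfrak{P}^{-1}(p)$). Then the multiplicity of the Reeb orbit $\pi_G\circ\gamma_p$ of $\lambda_{G,\varepsilon}$ is $2|H_p|$ if $|G|$ is even, and $|H_p|$ if $|G|$ is odd.
   Context: $S^3\subset\mathbb{C}^2$ with $\lambda=\frac12\sum(x_kdy_k-y_kdx_k)|_{S^3}$; $\mathfrak{P}:S^3\to S^2$ the Hopf fibration; $P:\mathrm{SU}(2)\to\mathrm{SO}(3)$ the standard double cover (kernel $\{\pm\mathrm{Id}\}$); $H$ acts on $S^2$ by rotations, $H_p$ is the isotropy subgroup of $p$. $\lambda_\varepsilon=((1+\varepsilon f)\circ\mathfrak{P})\lambda$; $\pi_G:S^3\to S^3/G$ the quotient; $\lambda_{G,\varepsilon}$ is the contact form on $S^3/G$ with $\pi_G^*\lambda_{G,\varepsilon}=\lambda_\varepsilon$ (well defined since $f$ is $H$-invariant). The multiplicity of a Reeb orbit is the integer $m$ such that it is the $m$-fold iterate of an embedded Reeb orbit. *)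

theory Defs
  imports "HOL-Analysis.Analysis"
begin

primrec ck_on :: "nat \<Rightarrow> 'a::euclidean_space set \<Rightarrow> ('a \<Rightarrow> real) \<Rightarrow> bool" where
  "ck_on 0 U f = continuous_on U f"
| "ck_on (Suc k) U f =
     (\<exists>D :: 'a \<Rightarrow> 'a \<Rightarrow> real.
        (\<forall>x\<in>U. (f has_derivative (\<lambda>v. \<Sum>b\<in>Basis. (v \<bullet> b) * D b x)) (at x))
        \<and> (\<forall>b\<in>Basis. ck_on k U (D b)))"

definition smooth_on :: "'a::euclidean_space set \<Rightarrow> ('a \<Rightarrow> real) \<Rightarrow> bool" where
  "smooth_on U f \<longleftrightarrow> (\<forall>k. ck_on k U f)"

definition S2 :: "(real^3) set" where
  "S2 = {x. norm x = 1}"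

definition S3 :: "(complex^2) set" where
  "S3 = {z. norm z = 1}"

definition amb_grad :: "(real^3 \<Rightarrow> real) \<Rightarrow> real^3 \<Rightarrow> real^3" where
  "amb_grad f x = (THE g. GDERIV f x :> g)"

definition sph_grad :: "(real^3 \<Rightarrow> real) \<Rightarrow> real^3 \<Rightarrow> real^3" where
  "sph_grad f x = amb_grad f x - (amb_grad f x \<bullet> x) *\<^sub>R x"

definition crit_S2 :: "(real^3 \<Rightarrow> real) \<Rightarrow> real^3 \<Rightarrow> bool" where
  "crit_S2 f p \<longleftrightarrow> p \<in> S2 \<and> sph_grad f p = 0"

definition sph_curve :: "real^3 \<Rightarrow> real^3 \<Rightarrow> real \<Rightarrow> real^3" where
  "sph_curve p v t = (1 / norm (p + t *\<^sub>R v)) *\<^sub>R (p + t *\<^sub>R v)"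

text \<open>Hessian quadratic form at a critical point p (intrinsic at critical points).\<close>
definition hess_quad :: "(real^3 \<Rightarrow> real) \<Rightarrow> real^3 \<Rightarrow> real^3 \<Rightarrow> real" where
  "hess_quad f p v = deriv (deriv (\<lambda>t. f (sph_curve p v t))) 0"

definition hess_form :: "(real^3 \<Rightarrow> real) \<Rightarrow> real^3 \<Rightarrow> real^3 \<Rightarrow> real^3 \<Rightarrow> real" where
  "hess_form f p v w = (hess_quad f p (v + w) - hess_quad f p (v - w)) / 4"

definition nondeg_crit_S2 :: "(real^3 \<Rightarrow> real) \<Rightarrow> real^3 \<Rightarrow> bool" where
  "nondeg_crit_S2 f p \<longleftrightarrow> crit_S2 f p \<and>
     (\<forall>v. v \<bullet> p = 0 \<and> v \<noteq> 0 \<longrightarrow> (\<exists>w. w \<bullet> p = 0 \<and> hess_form f p v w \<noteq> 0))"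

definition saddle_S2 :: "(real^3 \<Rightarrow> real) \<Rightarrow> real^3 \<Rightarrow> bool" where
  "saddle_S2 f p \<longleftrightarrow> nondeg_crit_S2 f p \<and>
     (\<exists>v w. v \<bullet> p = 0 \<and> w \<bullet> p = 0 \<and> hess_quad f p v < 0 \<and> 0 < hess_quad f p w)"

definition morse_S2 :: "(real^3 \<Rightarrow> real) \<Rightarrow> bool" where
  "morse_S2 f \<longleftrightarrow> (\<forall>p. crit_S2 f p \<longrightarrow> nondeg_crit_S2 f p)"

definition grad_flow_line :: "(real^3 \<Rightarrow> real) \<Rightarrow> (real \<Rightarrow> real^3) \<Rightarrow> bool" where
  "grad_flow_line f c \<longleftrightarrow>
     (\<forall>t. c t \<in> S2 \<and> (c has_vector_derivative sph_grad f (c t)) (at t))"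

text \<open>Morse--Smale (round metric) on the 2-sphere: Morse, and stable/unstable manifolds
  intersect transversally; in dimension 2 the only possible failure of transversality is a
  non-constant gradient flow line from a saddle to a saddle.\<close>
definition morse_smale_S2 :: "(real^3 \<Rightarrow> real) \<Rightarrow> bool" where
  "morse_smale_S2 f \<longleftrightarrow> morse_S2 f \<and>
     (\<nexists>c p q. grad_flow_line f c \<and> \<not> crit_S2 f (c 0) \<and> saddle_S2 f p \<and> saddle_S2 f q
              \<and> (c \<longlongrightarrow> p) at_bot \<and> (c \<longlongrightarrow> q) at_top)"

definition cadjoint :: "complex^2^2 \<Rightarrow> complex^2^2" where
  "cadjoint A = (\<chi> i j. cnj (A $ j $ i))"

definition SU2 :: "(complex^2^2) set" where
  "SU2 = {A. cadjoint A ** A = mat 1 \<and> det A = 1}"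

text \<open>Identification of R^3 with traceless Hermitian 2x2 matrices (Pauli matrices).\<close>
definition sigma :: "real^3 \<Rightarrow> complex^2^2" where
  "sigma v = (\<chi> i j.
     if i = 1 \<and> j = 1 then complex_of_real (v $ 3)
     else if i = 1 \<and> j = 2 then Complex (v $ 1) (- (v $ 2))
     else if i = 2 \<and> j = 1 then Complex (v $ 1) (v $ 2)
     else complex_of_real (- (v $ 3)))"

definition unsigma :: "complex^2^2 \<Rightarrow> real^3" where
  "unsigma X = vector [Re (X $ 2 $ 1), Im (X $ 2 $ 1), Re (X $ 1 $ 1)]"

definition rotP :: "complex^2^2 \<Rightarrow> real^3 \<Rightarrow> real^3" where
  "rotP g v = unsigma (g ** sigma v ** cadjoint g)"

text \<open>Hopf fibration, equivariant: hopf (g *v z) = rotP g (hopf z).\<close>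
definition hopf :: "complex^2 \<Rightarrow> real^3" where
  "hopf z = vector [2 * Re (cnj (z $ 1) * z $ 2), 2 * Im (cnj (z $ 1) * z $ 2),
                    (cmod (z $ 1))\<^sup>2 - (cmod (z $ 2))\<^sup>2]"

definition isotropy :: "(real^3 \<Rightarrow> real^3) set \<Rightarrow> real^3 \<Rightarrow> (real^3 \<Rightarrow> real^3) set" where
  "isotropy H p = {h \<in> H. h p = p}"

definition Fix :: "(real^3 \<Rightarrow> real^3) set \<Rightarrow> (real^3) set" where
  "Fix H = {p \<in> S2. card (isotropy H p) > 1}"

definition finite_subgroup_SU2 :: "(complex^2^2) set \<Rightarrow> bool" where
  "finite_subgroup_SU2 G \<longleftrightarrow> G \<subseteq> SU2 \<and> finite G \<and> mat 1 \<in> G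
     \<and> (\<forall>a\<in>G. \<forall>b\<in>G. a ** b \<in> G) \<and> (\<forall>a\<in>G. matrix_inv a \<in> G)"

text \<open>pi_G: a point of S3/G is represented as its G-orbit.\<close>
definition piG :: "(complex^2^2) set \<Rightarrow> complex^2 \<Rightarrow> (complex^2) set" where
  "piG G z = {g *v z | g. g \<in> G}"

definition gamma_orbit :: "(real^3 \<Rightarrow> real) \<Rightarrow> real \<Rightarrow> complex^2 \<Rightarrow> real \<Rightarrow> complex^2" where
  "gamma_orbit f \<epsilon> z t = cis (t / (1 + \<epsilon> * f (hopf z))) *s z"

text \<open>A closed orbit gamma : [0,T] -> X is the m-fold iterate of an embedded closed orbit
  (of period T/m).\<close>
definition is_m_fold_iterate :: "(real \<Rightarrow> 'x) \<Rightarrow> real \<Rightarrow> nat \<Rightarrow> bool" where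
  "is_m_fold_iterate \<gamma> T m \<longleftrightarrow> m > 0 \<and>
     (\<forall>t. 0 \<le> t \<and> t + T / real m \<le> T \<longrightarrow> \<gamma> (t + T / real m) = \<gamma> t) \<and>
     inj_on \<gamma> {0..<T / real m}"

end

theory Submission imports Defs begin

lemma mv2: "((A::complex^2^2) *v x) $ i = A$i$1 * x$1 + A$i$2 * x$2"
  by (simp add: matrix_vector_mult_def sum_2)
lemma mm2: "((A::complex^2^2) ** B) $ i $ j = A$i$1 * B$1$j + A$i$2 * B$2$j"
  by (simp add: matrix_matrix_mult_def sum_2)
lemma cadj_c: "cadjoint A $ i $ j = cnj (A $ j $ i)"
  by (simp add: cadjoint_def)
lemma norm2: "norm (z::complex^2) = sqrt ((cmod (z$1))\<^sup>2 + (cmod (z$2))\<^sup>2)"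
  by (simp add: norm_vec_def L2_set_def sum_2)


lemma SU2_form:
  assumes "g \<in> SU2"
  shows "g$2$1 = - cnj (g$1$2)" "g$2$2 = cnj (g$1$1)"
    "g$1$1 * cnj (g$1$1) + g$1$2 * cnj (g$1$2) = 1"
proof -
  define a where "a = g$1$1"
  define b where "b = g$1$2"
  define c where "c = g$2$1"
  define d where "d = g$2$2"
  have m: "cadjoint g ** g = mat 1" and dt: "det g = 1" using assms by (auto simp: SU2_def)
  have "(cadjoint g ** g)$1$1 = 1" using m by (simp add: mat_def)
  hence e11: "cnj a * a + cnj c * c = 1" by (simp add: mm2 cadj_c a_def c_def)
  have "(cadjoint g ** g)$1$2 = 0" using m by (simp add: mat_def)
  hence e12: "cnj a * b + cnj c * d = 0" by (simp add: mm2 cadj_c a_def b_def c_def d_def)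
  have dd: "a * d - b * c = 1" using dt by (simp add: det_2 a_def b_def c_def d_def)
  have D: "d = cnj a"
  proof -
    have "cnj a * (a * d - b * c) = cnj a" using dd by simp
    hence "d * (cnj a * a + cnj c * c) - c * (cnj a * b + cnj c * d) = cnj a" by (simp add: algebra_simps)
    thus ?thesis using e11 e12 by simp
  qed
  have C: "cnj c = - b"
  proof -
    have "cnj c * (a * d - b * c) = cnj c" using dd by simp
    hence "a * (cnj a * b + cnj c * d) - b * (cnj a * a + cnj c * c) = cnj c" by (simp add: algebra_simps)
    thus ?thesis using e11 e12 by simp
  qed
  have C': "c = - cnj b" using arg_cong[OF C, of cnj] by simp
  show "g$2$1 = - cnj (g$1$2)" using C' by (simp add: c_def b_def)
  show "g$2$2 = cnj (g$1$1)" using D by (simp add: d_def a_def)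
  have "a * cnj a + b * cnj b = 1" using e11 C' by (simp add: algebra_simps)
  thus "g$1$1 * cnj (g$1$1) + g$1$2 * cnj (g$1$2) = 1" by (simp add: a_def b_def)
qed

lemma cmod_sq: "complex_of_real ((cmod x)\<^sup>2) = x * cnj x"
  by (rule complex_norm_square)

lemma SU2_mv:
  assumes "g \<in> SU2"
  shows "(g *v z)$1 = g$1$1 * z$1 + g$1$2 * z$2"
    "(g *v z)$2 = - cnj (g$1$2) * z$1 + cnj (g$1$1) * z$2"
  using SU2_form[OF assms] by (simp_all add: mv2)

lemma hopf_c:
  "hopf z $ 1 = 2 * Re (cnj (z $ 1) * z $ 2)"
  "hopf z $ 2 = 2 * Im (cnj (z $ 1) * z $ 2)"
  "hopf z $ 3 = (cmod (z $ 1))\<^sup>2 - (cmod (z $ 2))\<^sup>2"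
  by (simp_all add: hopf_def)

lemma sigma_hopf:
  "sigma (hopf z) $ 1 $ 1 = z$1 * cnj (z$1) - z$2 * cnj (z$2)"
  "sigma (hopf z) $ 1 $ 2 = 2 * z$1 * cnj (z$2)"
  "sigma (hopf z) $ 2 $ 1 = 2 * cnj (z$1) * z$2"
  "sigma (hopf z) $ 2 $ 2 = - (z$1 * cnj (z$1) - z$2 * cnj (z$2))"
proof -
  have e: "complex_of_real ((cmod (z $ 1))\<^sup>2 - (cmod (z $ 2))\<^sup>2) = z$1 * cnj (z$1) - z$2 * cnj (z$2)"
    unfolding of_real_diff cmod_sq ..
  show "sigma (hopf z) $ 1 $ 1 = z$1 * cnj (z$1) - z$2 * cnj (z$2)"
    using e by (simp add: sigma_def hopf_c del: of_real_diff of_real_power)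
  have "sigma (hopf z) $ 2 $ 2 = - complex_of_real ((cmod (z $ 1))\<^sup>2 - (cmod (z $ 2))\<^sup>2)"
    by (simp add: sigma_def hopf_c del: of_real_diff of_real_power)
  then show "sigma (hopf z) $ 2 $ 2 = - (z$1 * cnj (z$1) - z$2 * cnj (z$2))"
    unfolding e .
  show "sigma (hopf z) $ 1 $ 2 = 2 * z$1 * cnj (z$2)"
    by (simp add: sigma_def hopf_c complex_eq_iff algebra_simps)
  show "sigma (hopf z) $ 2 $ 1 = 2 * cnj (z$1) * z$2"
    by (simp add: sigma_def hopf_c complex_eq_iff algebra_simps)
qed

lemma unsigma_c:
  "unsigma X $ 1 = Re (X $ 2 $ 1)" "unsigma X $ 2 = Im (X $ 2 $ 1)" "unsigma X $ 3 = Re (X $ 1 $ 1)"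
  by (simp_all add: unsigma_def)

lemma vec3_eq: "(x::real^3) = y \<longleftrightarrow> x$1 = y$1 \<and> x$2 = y$2 \<and> x$3 = y$3"
  by (metis (mono_tags, lifting) exhaust_3 vec_eq_iff)

lemma equivariance:
  assumes "g \<in> SU2"
  shows "rotP g (hopf z) = hopf (g *v z)"
proof -
  note F = SU2_form[OF assms]
  define a where "a = g$1$1"
  define b where "b = g$1$2"
  define M where "M = g ** sigma (hopf z) ** cadjoint g"
  have g21: "g$2$1 = - cnj b" and g22: "g$2$2 = cnj a" using F by (simp_all add: a_def b_def)
  have M11: "M$1$1 = (a * z$1 + b * z$2) * cnj (a * z$1 + b * z$2)
      - (- cnj b * z$1 + cnj a * z$2) * cnj (- cnj b * z$1 + cnj a * z$2)"
    unfolding M_def mm2 cadj_c sigma_hopf g21 g22 a_def[symmetric] b_def[symmetric]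
    by (simp add: algebra_simps)
  have M21: "M$2$1 = 2 * cnj (a * z$1 + b * z$2) * (- cnj b * z$1 + cnj a * z$2)"
    unfolding M_def mm2 cadj_c sigma_hopf g21 g22 a_def[symmetric] b_def[symmetric]
    by (simp add: algebra_simps)
  have u1: "(g *v z)$1 = a * z$1 + b * z$2" and u2: "(g *v z)$2 = - cnj b * z$1 + cnj a * z$2"
    using SU2_mv[OF assms] by (simp_all add: a_def b_def)
  have "M$1$1 = complex_of_real ((cmod ((g *v z)$1))\<^sup>2 - (cmod ((g *v z)$2))\<^sup>2)"
    unfolding M11 of_real_diff cmod_sq u1 u2 ..
  then have R: "Re (M$1$1) = (cmod ((g *v z)$1))\<^sup>2 - (cmod ((g *v z)$2))\<^sup>2" by simp
  have I: "M$2$1 = 2 * cnj ((g *v z)$1) * (g *v z)$2" unfolding M21 u1 u2 ..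
  show ?thesis
    unfolding vec3_eq rotP_def M_def[symmetric] unsigma_c hopf_c R I by simp
qed

lemma norm1c: "norm (z::complex^2) = 1 \<Longrightarrow> z$1 * cnj (z$1) + z$2 * cnj (z$2) = 1"
proof -
  assume "norm z = 1"
  then have "(cmod (z$1))\<^sup>2 + (cmod (z$2))\<^sup>2 = 1" unfolding norm2
    by (metis real_sqrt_eq_1_iff)
  then have "complex_of_real ((cmod (z$1))\<^sup>2 + (cmod (z$2))\<^sup>2) = 1" by simp
  then show ?thesis unfolding of_real_add cmod_sq .
qed

lemma norm_eq_c: "norm (u::complex^2) = norm (z::complex^2) \<longleftrightarrow>
   u$1 * cnj (u$1) + u$2 * cnj (u$2) = z$1 * cnj (z$1) + z$2 * cnj (z$2)"
proof -
  have "norm u = norm z \<longleftrightarrow> (cmod (u$1))\<^sup>2 + (cmod (u$2))\<^sup>2 = (cmod (z$1))\<^sup>2 + (cmod (z$2))\<^sup>2"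
    unfolding norm2[of u] norm2[of z] by simp
  also have "\<dots> \<longleftrightarrow> complex_of_real ((cmod (u$1))\<^sup>2 + (cmod (u$2))\<^sup>2) = complex_of_real ((cmod (z$1))\<^sup>2 + (cmod (z$2))\<^sup>2)"
    by (simp only: of_real_eq_iff)
  also have "\<dots> \<longleftrightarrow> u$1 * cnj (u$1) + u$2 * cnj (u$2) = z$1 * cnj (z$1) + z$2 * cnj (z$2)"
    unfolding of_real_add cmod_sq ..
  finally show ?thesis .
qed

lemma norm_pres:
  assumes "g \<in> SU2"
  shows "norm (g *v z) = norm z"
proof -
  note F = SU2_form[OF assms]
  define a where "a = g$1$1"
  define b where "b = g$1$2"
  have c: "a * cnj a + b * cnj b = 1" using F by (simp add: a_def b_def)
  have u1: "(g *v z)$1 = a * z$1 + b * z$2" and u2: "(g *v z)$2 = - cnj b * z$1 + cnj a * z$2"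
    using SU2_mv[OF assms] by (simp_all add: a_def b_def)
  have "(a * z$1 + b * z$2) * cnj (a * z$1 + b * z$2) + (- cnj b * z$1 + cnj a * z$2) * cnj (- cnj b * z$1 + cnj a * z$2)
     = (a * cnj a + b * cnj b) * (z$1 * cnj (z$1) + z$2 * cnj (z$2))"
    by (simp add: algebra_simps)
  then show ?thesis unfolding norm_eq_c u1 u2 c by simp
qed

lemma hopf_scale:
  assumes "cmod w = 1"
  shows "hopf (w *s z) = hopf z"
proof -
  have w: "cnj w * w = 1" using assms complex_norm_square[of w]
    by (metis mult.commute of_real_1 one_power2)
  have "cnj (w * z$1) * (w * z$2) = (cnj w * w) * (cnj (z$1) * z$2)" by (simp add: algebra_simps)
  then have 1: "cnj (w * z$1) * (w * z$2) = cnj (z$1) * z$2" using w by simp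
  show ?thesis unfolding vec3_eq hopf_c vector_smult_component 1 norm_mult assms by simp
qed

lemma mv_scale: "(g::complex^2^2) *v (c *s z) = c *s (g *v z)"
  by (simp add: vec_eq_iff forall_2 mv2 algebra_simps)

lemma hopf_fiber:
  assumes "norm u = norm z" "z \<noteq> 0" "hopf u = hopf z"
  shows "\<exists>w. cmod w = 1 \<and> u = w *s z"
proof -
  have h1: "Re (cnj (u$1) * u$2) = Re (cnj (z$1) * z$2)" "Im (cnj (u$1) * u$2) = Im (cnj (z$1) * z$2)"
    using arg_cong[OF assms(3), of "\<lambda>v. v$1"] arg_cong[OF assms(3), of "\<lambda>v. v$2"] by (simp_all add: hopf_c)
  then have e12: "cnj (u$1) * u$2 = cnj (z$1) * z$2" by (simp add: complex_eq_iff)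
  have h3: "(cmod (u$1))\<^sup>2 - (cmod (u$2))\<^sup>2 = (cmod (z$1))\<^sup>2 - (cmod (z$2))\<^sup>2"
    using arg_cong[OF assms(3), of "\<lambda>v. v$3"] by (simp add: hopf_c)
  have hn: "(cmod (u$1))\<^sup>2 + (cmod (u$2))\<^sup>2 = (cmod (z$1))\<^sup>2 + (cmod (z$2))\<^sup>2"
    using assms(1) unfolding norm2 by simp
  have "(cmod (u$1))\<^sup>2 = (cmod (z$1))\<^sup>2" using h3 hn by linarith
  then have m1: "cmod (u$1) = cmod (z$1)" by (simp add: power2_eq_iff_nonneg)
  have "(cmod (u$2))\<^sup>2 = (cmod (z$2))\<^sup>2" using h3 hn by linarith
  then have m2: "cmod (u$2) = cmod (z$2)" by (simp add: power2_eq_iff_nonneg)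
  show ?thesis
  proof (cases "z$1 = 0")
    case False
    define w where "w = u$1 / z$1"
    have w1: "cmod w = 1" using m1 False by (simp add: w_def norm_divide)
    have "u$1 * cnj (u$1) * u$2 = u$1 * cnj (z$1) * z$2" using e12 by (simp add: mult.assoc)
    moreover have "u$1 * cnj (u$1) = z$1 * cnj (z$1)" using m1 by (metis cmod_sq)
    ultimately have "z$1 * cnj (z$1) * u$2 = u$1 * cnj (z$1) * z$2" by simp
    then have "z$1 * u$2 = u$1 * z$2" using False by (simp add: mult.commute mult.left_commute)
    then have "u$2 = w * z$2" using False by (simp add: w_def field_simps)
    moreover have "u$1 = w * z$1" using False by (simp add: w_def)
    ultimately show ?thesis using w1 by (intro exI[of _ w]) (simp add: vec_eq_iff forall_2)
  next
    case True
    then have u1: "u$1 = 0" using m1 by simp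
    have z2: "z$2 \<noteq> 0" using True assms(2) by (simp add: vec_eq_iff forall_2)
    define w where "w = u$2 / z$2"
    have w1: "cmod w = 1" using m2 z2 by (simp add: w_def norm_divide)
    show ?thesis using w1 u1 True z2 by (intro exI[of _ w]) (simp add: vec_eq_iff forall_2 w_def)
  qed
qed

lemma mat_eq2: "(A::complex^2^2) = B \<longleftrightarrow> A$1$1 = B$1$1 \<and> A$1$2 = B$1$2 \<and> A$2$1 = B$2$1 \<and> A$2$2 = B$2$2"
  by (auto simp: vec_eq_iff forall_2)

lemma mat1_c: "(mat 1 :: complex^2^2)$1$1 = 1" "(mat 1 :: complex^2^2)$2$2 = 1"
  "(mat 1 :: complex^2^2)$1$2 = 0" "(mat 1 :: complex^2^2)$2$1 = 0"
  by (simp_all add: mat_def)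

lemma SU2_unitary:
  assumes "g \<in> SU2"
  shows "g ** cadjoint g = mat 1" "cadjoint g ** g = mat 1"
proof -
  note F = SU2_form[OF assms]
  show "cadjoint g ** g = mat 1" using assms by (simp add: SU2_def)
  show "g ** cadjoint g = mat 1"
    unfolding mat_eq2 mm2 cadj_c mat1_c F using F(3)
    by (simp add: algebra_simps)
qed

lemma SU2_invertible:
  assumes "g \<in> SU2"
  shows "g ** matrix_inv g = mat 1" "matrix_inv g ** g = mat 1"
proof -
  have "\<exists>A'. g ** A' = mat 1 \<and> A' ** g = mat 1" using SU2_unitary[OF assms] by blast
  then have "g ** matrix_inv g = mat 1 \<and> matrix_inv g ** g = mat 1"
    unfolding matrix_inv_def by (rule someI_ex)
  then show "g ** matrix_inv g = mat 1" "matrix_inv g ** g = mat 1" by auto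
qed

lemma SU2_neg: "g \<in> SU2 \<Longrightarrow> - g \<in> SU2"
  unfolding SU2_def
  by (auto simp: mat_eq2 mm2 cadj_c det_2 mat1_c)

lemma neg_mv: "(- (g::complex^2^2)) *v z = - (g *v z)"
  by (simp add: vec_eq_iff forall_2 mv2)

lemma rotP_neg: "rotP (- g) = rotP g"
proof -
  have "(- g) ** X ** cadjoint (- g) = g ** X ** cadjoint g" for X
    by (simp add: mat_eq2 mm2 cadj_c algebra_simps)
  then show ?thesis unfolding rotP_def by simp
qed

lemma SU2_inj:
  assumes "g \<in> SU2" "h \<in> SU2" "norm z = 1" "g *v z = h *v z"
  shows "g = h"
proof -
  note F = SU2_form[OF assms(1)] and G = SU2_form[OF assms(2)]
  define al where "al = g$1$1 - h$1$1"
  define be where "be = g$1$2 - h$1$2"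
  have n: "z$1 * cnj (z$1) + z$2 * cnj (z$2) = 1" using norm1c[OF assms(3)] .
  have "(g *v z)$1 = (h *v z)$1" "(g *v z)$2 = (h *v z)$2" using assms(4) by simp_all
  then have e1: "al * z$1 + be * z$2 = 0" and e2: "- cnj be * z$1 + cnj al * z$2 = 0"
    unfolding SU2_mv[OF assms(1)] SU2_mv[OF assms(2)] al_def be_def
    by (simp_all add: algebra_simps)
  have e2': "- be * cnj (z$1) + al * cnj (z$2) = 0" using arg_cong[OF e2, of cnj] by simp
  have "al * (z$1 * cnj (z$1) + z$2 * cnj (z$2)) = cnj (z$1) * (al * z$1 + be * z$2) + z$2 * (- be * cnj (z$1) + al * cnj (z$2))"
    by (simp add: algebra_simps)
  then have A: "al = 0" using e1 e2' n by simp
  have "be * (z$1 * cnj (z$1) + z$2 * cnj (z$2)) = cnj (z$2) * (al * z$1 + be * z$2) - z$1 * (- be * cnj (z$1) + al * cnj (z$2))"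
    by (simp add: algebra_simps)
  then have B: "be = 0" using e1 e2' n by simp
  show ?thesis using A B unfolding mat_eq2 F G al_def be_def by simp
qed

lemma SU2_sq:
  assumes "g \<in> SU2" "g ** g = mat 1"
  shows "g = mat 1 \<or> g = - mat 1"
proof -
  note F = SU2_form[OF assms(1)]
  define a where "a = g$1$1"
  define b where "b = g$1$2"
  have c: "a * cnj a + b * cnj b = 1" using F by (simp add: a_def b_def)
  have e11: "a * a - b * cnj b = 1" and e12: "a * b + b * cnj a = 0"
    using arg_cong[OF assms(2), of "\<lambda>M. M$1$1"] arg_cong[OF assms(2), of "\<lambda>M. M$1$2"]
    unfolding mm2 F a_def[symmetric] b_def[symmetric] mat1_c by (simp_all add: algebra_simps)
  have "b = 0"
  proof (rule ccontr)
    assume "b \<noteq> 0"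
    moreover have "b * (a + cnj a) = 0" using e12 by (simp add: algebra_simps)
    ultimately have "a + cnj a = 0" by simp
    then have "cnj a = - a" by (metis add.commute eq_neg_iff_add_eq_0)
    then have "- (a * a) + b * cnj b = 1" using c by simp
    then have "(a * a - b * cnj b) + (- (a * a) + b * cnj b) = 2" using e11 by simp
    then show False by simp
  qed
  then have "a * a = 1" using e11 by simp
  then have "a = 1 \<or> a = -1" by (metis power2_eq_1_iff power2_eq_square)
  moreover have "cnj a = a" if "a = 1 \<or> a = -1" using that by auto
  ultimately show ?thesis unfolding mat_eq2 F a_def[symmetric] b_def[symmetric] using \<open>b = 0\<close>
    by (auto simp: mat_def)
qed

lemma invol_even:
  assumes "finite A" "\<forall>x\<in>A. \<sigma> x \<in> A \<and> \<sigma> (\<sigma> x) = x \<and> \<sigma> x \<noteq> x"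
  shows "even (card A)"
  using assms
proof (induction "card A" arbitrary: A rule: less_induct)
  case less
  show ?case
  proof (cases "A = {}")
    case True then show ?thesis by simp
  next
    case False
    then obtain x where x: "x \<in> A" by blast
    define A' where "A' = A - {x, \<sigma> x}"
    have sx: "\<sigma> x \<in> A" "\<sigma> x \<noteq> x" using less.prems x by auto
    have cA: "card A = card A' + 2"
    proof -
      have "{x, \<sigma> x} \<subseteq> A" using x sx by auto
      then have "card A' = card A - card {x, \<sigma> x}" unfolding A'_def
        using less.prems(1) by (simp add: card_Diff_subset finite_subset)
      moreover have "card {x, \<sigma> x} = 2" using sx by simp
      moreover have "card {x, \<sigma> x} \<le> card A" using \<open>{x, \<sigma> x} \<subseteq> A\<close> less.prems(1) card_mono by blast
      ultimately show ?thesis by simp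
    qed
    have "even (card A')"
    proof (rule less.hyps)
      show "card A' < card A" using cA by simp
      show "finite A'" using less.prems(1) by (simp add: A'_def)
      show "\<forall>y\<in>A'. \<sigma> y \<in> A' \<and> \<sigma> (\<sigma> y) = y \<and> \<sigma> y \<noteq> y"
      proof
        fix y assume y: "y \<in> A'"
        then have yA: "y \<in> A" "y \<noteq> x" "y \<noteq> \<sigma> x" by (auto simp: A'_def)
        have p: "\<sigma> y \<in> A" "\<sigma> (\<sigma> y) = y" "\<sigma> y \<noteq> y" using less.prems(2) yA(1) by auto
        have "\<sigma> y \<noteq> x" using p(2) yA(3) by auto
        moreover have "\<sigma> y \<noteq> \<sigma> x" using yA(2) p(2) less.prems(2) x by metis
        ultimately show "\<sigma> y \<in> A' \<and> \<sigma> (\<sigma> y) = y \<and> \<sigma> y \<noteq> y" using p by (simp add: A'_def)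
      qed
    qed
    then show ?thesis using cA by simp
  qed
qed

lemma neg_mm: "(- (A::complex^2^2)) ** (B::complex^2^2) = - (A ** B)"
  unfolding mat_eq2 by (simp add: mm2)

lemma negI_mm: "(- mat 1 :: complex^2^2) ** (B::complex^2^2) = - B"
  unfolding mat_eq2 by (simp add: mm2 mat_def)

lemma SU2_nz: "g \<in> SU2 \<Longrightarrow> g \<noteq> - g"
proof
  assume g: "g \<in> SU2" "g = - g"
  then have "g$i$j = - (g$i$j)" for i j by (metis vector_uminus_component)
  then have "g$i$j = 0" for i j by (simp add: complex_eq_iff)
  then have "det g = 0" by (simp add: det_2)
  with g show False by (simp add: SU2_def)
qed

lemma matrix_inv_inv_SU2:
  assumes "g \<in> SU2" "matrix_inv g \<in> SU2"
  shows "matrix_inv (matrix_inv g) = g"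
proof -
  let ?m = "matrix_inv g"
  have "matrix_inv ?m = matrix_inv ?m ** (?m ** g)" using SU2_invertible(2)[OF assms(1)] by simp
  also have "\<dots> = (matrix_inv ?m ** ?m) ** g" by (simp add: matrix_mul_assoc)
  also have "\<dots> = g" using SU2_invertible(2)[OF assms(2)] by simp
  finally show ?thesis .
qed

lemma negI_even:
  assumes "finite_subgroup_SU2 G"
  shows "- mat 1 \<in> G \<longleftrightarrow> even (card G)"
proof -
  have GS: "G \<subseteq> SU2" "finite G" "mat 1 \<in> G" "\<forall>a\<in>G. \<forall>b\<in>G. a ** b \<in> G" "\<forall>a\<in>G. matrix_inv a \<in> G"
    using assms by (auto simp: finite_subgroup_SU2_def)
  show ?thesis
  proof
    assume n: "- mat 1 \<in> G"
    show "even (card G)"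
    proof (rule invol_even[of G uminus])
      show "finite G" by fact
      show "\<forall>x\<in>G. - x \<in> G \<and> - (- x) = x \<and> - x \<noteq> x"
      proof
        fix x assume x: "x \<in> G"
        have "- x \<in> G" using GS(4) n x negI_mm[of x] by metis
        moreover have "- x \<noteq> x" using SU2_nz[of x] x GS(1) by auto
        ultimately show "- x \<in> G \<and> - (- x) = x \<and> - x \<noteq> x" by simp
      qed
    qed
  next
    assume ev: "even (card G)"
    show "- mat 1 \<in> G"
    proof (rule ccontr)
      assume n: "- mat 1 \<notin> G"
      have "even (card (G - {mat 1}))"
      proof (rule invol_even[of _ matrix_inv])
        show "finite (G - {mat 1})" using GS(2) by simp
        show "\<forall>x\<in>G - {mat 1}. matrix_inv x \<in> G - {mat 1} \<and> matrix_inv (matrix_inv x) = x \<and> matrix_inv x \<noteq> x"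
        proof
          fix x assume x: "x \<in> G - {mat 1}"
          have xS: "x \<in> SU2" using x GS(1) by auto
          have mG: "matrix_inv x \<in> G" using GS(5) x by auto
          have mS: "matrix_inv x \<in> SU2" using mG GS(1) by auto
          have "matrix_inv x \<noteq> mat 1"
          proof
            assume "matrix_inv x = mat 1"
            then have "x = mat 1" using SU2_invertible(2)[OF xS] by (simp add: matrix_mul_lid)
            then show False using x by simp
          qed
          moreover have "matrix_inv x \<noteq> x"
          proof
            assume "matrix_inv x = x"
            then have "x ** x = mat 1" using SU2_invertible(1)[OF xS] by simp
            then have "x = mat 1 \<or> x = - mat 1" using SU2_sq[OF xS] by simp
            then show False using x n by auto
          qed
          ultimately show "matrix_inv x \<in> G - {mat 1} \<and> matrix_inv (matrix_inv x) = x \<and> matrix_inv x \<noteq> x"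
            using mG matrix_inv_inv_SU2[OF xS mS] by simp
        qed
      qed
      moreover have "card G = card (G - {mat 1}) + 1" using GS(2,3)
        by (metis Suc_eq_plus1 card_Suc_Diff1)
      ultimately show False using ev by simp
    qed
  qed
qed

definition Jq :: "complex^2 \<Rightarrow> complex^2" where
  "Jq x = (\<chi> i. if i = 1 then - cnj (x$2) else cnj (x$1))"

lemma Jq_c: "Jq x $ 1 = - cnj (x$2)" "Jq x $ 2 = cnj (x$1)"
  by (simp_all add: Jq_def)

lemma vec2_eq: "(x::complex^2) = y \<longleftrightarrow> x$1 = y$1 \<and> x$2 = y$2"
  by (auto simp: vec_eq_iff forall_2)

lemma SU2_Jq: "g \<in> SU2 \<Longrightarrow> g *v Jq x = Jq (g *v x)"
  unfolding vec2_eq Jq_c SU2_mv by (simp add: algebra_simps)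

lemma Jq_scale: "Jq (w *s x) = cnj w *s Jq x"
  unfolding vec2_eq vector_smult_component Jq_c by simp

lemma indep:
  assumes "norm z = 1" "al *s z + be *s Jq z = 0"
  shows "al = 0 \<and> be = 0"
proof -
  have n: "z$1 * cnj (z$1) + z$2 * cnj (z$2) = 1" using norm1c[OF assms(1)] .
  have e1: "al * z$1 - be * cnj (z$2) = 0" and e2: "al * z$2 + be * cnj (z$1) = 0"
    using arg_cong[OF assms(2), of "\<lambda>v. v$1"] arg_cong[OF assms(2), of "\<lambda>v. v$2"]
    by (simp_all add: Jq_c)
  have "al * (z$1 * cnj (z$1) + z$2 * cnj (z$2)) = cnj (z$1) * (al * z$1 - be * cnj (z$2)) + cnj (z$2) * (al * z$2 + be * cnj (z$1))"
    by (simp add: algebra_simps)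
  then have "al = 0" using n e1 e2 by simp
  moreover have "be * (z$1 * cnj (z$1) + z$2 * cnj (z$2)) = z$1 * (al * z$2 + be * cnj (z$1)) - z$2 * (al * z$1 - be * cnj (z$2))"
    by (simp add: algebra_simps)
  then have "be = 0" using n e1 e2 by simp
  ultimately show ?thesis by simp
qed

lemma norm_smult_c: "norm (w *s (z::complex^2)) = cmod w * norm z"
proof -
  have "norm (w *s z) = sqrt ((cmod w)\<^sup>2 * ((cmod (z$1))\<^sup>2 + (cmod (z$2))\<^sup>2))"
    unfolding norm2 by (simp add: norm_mult power_mult_distrib algebra_simps)
  also have "\<dots> = cmod w * norm z" unfolding norm2 by (simp add: real_sqrt_mult)
  finally show ?thesis .
qed

lemma rot_fiber:
  assumes g: "g \<in> SU2" and h: "h \<in> SU2" and z: "norm z = 1"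
    and gw: "g *v z = w *s z" and hw: "h *v z = w' *s z" and w: "cmod w = 1" and w': "cmod w' = 1"
    and r: "rotP g = rotP h"
  shows "h = g \<or> h = - g"
proof -
  define v where "v = z + Jq z"
  have gv: "g *v v = w *s z + cnj w *s Jq z"
    unfolding v_def matrix_vector_right_distrib SU2_Jq[OF g] gw Jq_scale ..
  have hv: "h *v v = w' *s z + cnj w' *s Jq z"
    unfolding v_def matrix_vector_right_distrib SU2_Jq[OF h] hw Jq_scale ..
  have z0: "z \<noteq> 0" using z by auto
  have v0: "g *v v \<noteq> 0"
  proof
    assume "g *v v = 0"
    then have "w = 0 \<and> cnj w = 0" using indep[OF z, of w "cnj w"] gv by simp
    then show False using w by simp
  qed
  have "hopf (h *v v) = hopf (g *v v)"
    using r equivariance[OF g, of v] equivariance[OF h, of v] by simp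
  moreover have "norm (h *v v) = norm (g *v v)" using norm_pres[OF g] norm_pres[OF h] by simp
  ultimately obtain c where c: "cmod c = 1" "h *v v = c *s (g *v v)"
    using hopf_fiber v0 by blast
  then have "(w' - c * w) *s z + (cnj w' - c * cnj w) *s Jq z = 0"
    unfolding gv hv by (simp add: vec2_eq algebra_simps)
  then have "w' - c * w = 0 \<and> cnj w' - c * cnj w = 0" by (rule indep[OF z])
  then have e: "w' = c * w" "cnj w' = c * cnj w" by auto
  have ww: "w * cnj w = 1" using w complex_norm_square[of w] by simp
  have c1: "c = w' * cnj w" using e(1) ww by (metis mult.assoc mult.commute mult_1)
  have c2: "c = cnj w' * w" using e(2) ww by (metis mult.assoc mult.commute mult_1)
  have "cnj c = c" using c1 c2 by simp
  then have "Im (cnj c) = Im c" by simp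
  then have "Im c = 0" by simp
  then have "\<bar>Re c\<bar> = 1" using c(1) by (simp add: cmod_def)
  then have "Re c = 1 \<or> Re c = -1" by linarith
  then have "c = 1 \<or> c = -1" using \<open>Im c = 0\<close> by (auto simp: complex_eq_iff)
  then show ?thesis
  proof
    assume "c = 1"
    then have "h *v z = g *v z" using e(1) gw hw by simp
    then show ?thesis using SU2_inj[OF h g z] by simp
  next
    assume "c = -1"
    then have "h *v z = (- g) *v z" using e(1) gw hw by (simp add: neg_mv vector_smult_lneg)
    then show ?thesis using SU2_inj[OF h SU2_neg[OF g] z] by simp
  qed
qed

lemma piG_act:
  assumes "finite_subgroup_SU2 G" "g \<in> G"
  shows "piG G (g *v x) = piG G x"
proof -
  have GS: "G \<subseteq> SU2" "\<forall>a\<in>G. \<forall>b\<in>G. a ** b \<in> G" "\<forall>a\<in>G. matrix_inv a \<in> G"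
    using assms by (auto simp: finite_subgroup_SU2_def)
  have gS: "g \<in> SU2" using GS assms by auto
  show ?thesis unfolding piG_def
  proof (intro set_eqI iffI)
    fix y assume "y \<in> {h *v (g *v x) |h. h \<in> G}"
    then obtain h where "h \<in> G" "y = h *v (g *v x)" by auto
    then show "y \<in> {h *v x |h. h \<in> G}" using GS assms(2)
      by (auto simp: matrix_vector_mul_assoc intro!: exI[of _ "h ** g"])
  next
    fix y assume "y \<in> {h *v x |h. h \<in> G}"
    then obtain h where hG: "h \<in> G" and y: "y = h *v x" by auto
    have "(h ** matrix_inv g) ** g = h"
      by (metis matrix_mul_assoc SU2_invertible(2)[OF gS] matrix_mul_rid)
    then have "(h ** matrix_inv g) *v (g *v x) = h *v x"
      by (simp add: matrix_vector_mul_assoc)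
    moreover have "h ** matrix_inv g \<in> G" using GS hG assms(2) by auto
    ultimately show "y \<in> {h *v (g *v x) |h. h \<in> G}" using y by (metis (mono_tags, lifting) mem_Collect_eq)
  qed
qed

lemma smult_cancel_z:
  fixes z :: "complex^2"
  assumes "norm z = 1" "w *s z = w' *s z"
  shows "w = w'"
proof -
  have "(w - w') *s z + 0 *s Jq z = 0" using assms(2) by (simp add: vec2_eq algebra_simps)
  then have "w - w' = 0 \<and> (0::complex) = 0" by (rule indep[OF assms(1)])
  then show ?thesis by simp
qed

lemma card_S:
  fixes G :: "(complex^2^2) set" and z :: "complex^2"
  assumes fsg: "finite_subgroup_SU2 G" and z: "norm z = 1"
  defines "S \<equiv> {g\<in>G. \<exists>w. cmod w = 1 \<and> g *v z = w *s z}"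
  shows "card S = (if even (card G) then 2 * card (isotropy (rotP ` G) (hopf z))
                   else card (isotropy (rotP ` G) (hopf z)))"
proof -
  have GS: "G \<subseteq> SU2" "finite G" "mat 1 \<in> G" "\<forall>a\<in>G. \<forall>b\<in>G. a ** b \<in> G" "\<forall>a\<in>G. matrix_inv a \<in> G"
    using fsg by (auto simp: finite_subgroup_SU2_def)
  have z0: "z \<noteq> 0" using z by auto
  have S': "S = {g\<in>G. rotP g (hopf z) = hopf z}"
  proof (intro set_eqI iffI)
    fix g assume gS0: "g \<in> S"
    obtain w where g: "g \<in> G" "cmod w = 1" "g *v z = w *s z" using gS0 unfolding S_def by auto
    have "rotP g (hopf z) = hopf (g *v z)" using equivariance g GS(1) by auto
    also have "\<dots> = hopf z" using g hopf_scale by simp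
    finally show "g \<in> {g\<in>G. rotP g (hopf z) = hopf z}" using g by simp
  next
    fix g assume "g \<in> {g\<in>G. rotP g (hopf z) = hopf z}"
    then have g: "g \<in> G" "rotP g (hopf z) = hopf z" by auto
    have gS: "g \<in> SU2" using g GS(1) by auto
    have "hopf (g *v z) = hopf z" using g equivariance[OF gS] by simp
    moreover have "norm (g *v z) = norm z" using norm_pres[OF gS] .
    ultimately obtain w where "cmod w = 1" "g *v z = w *s z" using hopf_fiber z0 by blast
    then show "g \<in> S" using g unfolding S_def by auto
  qed
  have iso: "isotropy (rotP ` G) (hopf z) = rotP ` S"
    unfolding S' isotropy_def by auto
  have fS: "finite S" using GS(2) unfolding S_def by simp
  have fib: "h = g \<or> h = - g" if "g \<in> S" "h \<in> S" "rotP g = rotP h" for g h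
  proof -
    have "g \<in> G \<and> (\<exists>w. cmod w = 1 \<and> g *v z = w *s z)" using that(1) unfolding S_def by simp
    then obtain w where g: "g \<in> G" "cmod w = 1" "g *v z = w *s z" by blast
    have "h \<in> G \<and> (\<exists>w. cmod w = 1 \<and> h *v z = w *s z)" using that(2) unfolding S_def by simp
    then obtain w' where h: "h \<in> G" "cmod w' = 1" "h *v z = w' *s z" by blast
    show ?thesis using rot_fiber[of g h z w w'] g h that(3) GS(1) z by auto
  qed
  show ?thesis
  proof (cases "even (card G)")
    case True
    then have nI: "- mat 1 \<in> G" using negI_even[OF fsg] by simp
    have negS: "- g \<in> S" if "g \<in> S" for g
    proof -
      have "g \<in> G \<and> (\<exists>w. cmod w = 1 \<and> g *v z = w *s z)" using that unfolding S_def by simp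
      then obtain w where g: "g \<in> G" "cmod w = 1" "g *v z = w *s z" by blast
      have "- g \<in> G" using GS(4) nI g(1) negI_mm[of g] by metis
      moreover have "(- g) *v z = (- w) *s z" using g(3) by (simp add: neg_mv vector_smult_lneg)
      ultimately show ?thesis using g(2) unfolding S_def by (auto intro!: exI[of _ "- w"])
    qed
    have fibcard: "card {g\<in>S. rotP g = y} = 2" if yS: "y \<in> rotP ` S" for y
    proof -
      obtain g0 where g0: "g0 \<in> S" "y = rotP g0" using yS by auto
      have "{g\<in>S. rotP g = y} = {g0, - g0}"
        using fib[OF g0(1)] negS[OF g0(1)] g0 rotP_neg by (auto simp: eq_commute[of "rotP g0"])
      moreover have "g0 \<noteq> - g0" using SU2_nz g0(1) GS(1) unfolding S_def by auto
      ultimately show ?thesis by simp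
    qed
    have U: "S = (\<Union>y\<in>rotP ` S. {g\<in>S. rotP g = y})" by auto
    have "card (\<Union>y\<in>rotP ` S. {g\<in>S. rotP g = y}) = (\<Sum>y\<in>rotP ` S. card {g\<in>S. rotP g = y})"
      by (rule card_UN_disjoint) (use fS in auto)
    then have "card S = (\<Sum>y\<in>rotP ` S. card {g\<in>S. rotP g = y})" using U by simp
    also have "\<dots> = (\<Sum>y\<in>rotP ` S. 2)" using fibcard by simp
    also have "\<dots> = 2 * card (rotP ` S)" by simp
    finally show ?thesis using True iso by simp
  next
    case False
    then have nI: "- mat 1 \<notin> G" using negI_even[OF fsg] by simp
    have "inj_on rotP S"
    proof (rule inj_onI)
      fix g h assume gh: "g \<in> S" "h \<in> S" "rotP g = rotP h"
      show "g = h"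
      proof (rule ccontr)
        assume "g \<noteq> h"
        then have hg: "h = - g" using fib[OF gh] by auto
        have gG: "g \<in> G" "h \<in> G" using gh unfolding S_def by auto
        have gS: "g \<in> SU2" using gG GS(1) by auto
        have "h ** matrix_inv g = - mat 1"
          unfolding hg neg_mm SU2_invertible(1)[OF gS] ..
        moreover have "h ** matrix_inv g \<in> G" using GS(4,5) gG by auto
        ultimately show False using nI by simp
      qed
    qed
    then show ?thesis using False iso by (simp add: card_image)
  qed
qed

lemma W_props:
  fixes G :: "(complex^2^2) set" and z :: "complex^2"
  assumes fsg: "finite_subgroup_SU2 G" and z: "norm z = 1"
  defines "S \<equiv> {g\<in>G. \<exists>w. cmod w = 1 \<and> g *v z = w *s z}"
  shows "card S > 0" "\<exists>g\<in>G. g *v z = cis (2 * pi / real (card S)) *s z"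
    "\<And>g w. g \<in> G \<Longrightarrow> g *v z = w *s z \<Longrightarrow> w ^ card S = 1"
proof -
  have GS: "G \<subseteq> SU2" "finite G" "mat 1 \<in> G" "\<forall>a\<in>G. \<forall>b\<in>G. a ** b \<in> G" "\<forall>a\<in>G. matrix_inv a \<in> G"
    using fsg by (auto simp: finite_subgroup_SU2_def)
  define m where "m = card S"
  define \<phi> where "\<phi> g = (SOME w. cmod w = 1 \<and> g *v z = w *s z)" for g
  have fS: "finite S" using GS(2) unfolding S_def by simp
  have phi: "cmod (\<phi> g) = 1 \<and> g *v z = \<phi> g *s z" if "g \<in> S" for g
  proof -
    have "\<exists>w. cmod w = 1 \<and> g *v z = w *s z" using that unfolding S_def by simp
    then show ?thesis unfolding \<phi>_def by (rule someI_ex)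
  qed
  have IS: "mat 1 \<in> S" using GS(3) unfolding S_def by (auto intro!: exI[of _ 1])
  then show m0: "card S > 0" using fS card_gt_0_iff by blast
  have mpos: "m > 0" using m0 m_def by simp
  have inS: "g \<in> S" if "g \<in> G" "g *v z = w *s z" for g w
  proof -
    have "g \<in> SU2" using that GS(1) by auto
    then have "norm (g *v z) = norm z" by (rule norm_pres)
    then have "cmod w = 1" using that(2) z norm_smult_c[of w z] by simp
    then show ?thesis using that unfolding S_def by auto
  qed
  have phi_eq: "\<phi> g = w" if gw: "g \<in> S" "g *v z = w *s z" for g w
  proof -
    have "\<phi> g *s z = w *s z" using conjunct2[OF phi[OF gw(1)]] gw(2) by (rule trans[OF sym])
    then show ?thesis by (rule smult_cancel_z[OF z])
  qed
  define W where "W = \<phi> ` S"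
  have inj: "inj_on \<phi> S"
  proof (rule inj_onI)
    fix g h assume gh: "g \<in> S" "h \<in> S" "\<phi> g = \<phi> h"
    then have "g *v z = h *v z" using phi[OF gh(1)] phi[OF gh(2)] by simp
    moreover have "g \<in> SU2" "h \<in> SU2" using gh GS(1) unfolding S_def by auto
    ultimately show "g = h" using SU2_inj z by blast
  qed
  have cW: "card W = m" unfolding W_def m_def using inj by (simp add: card_image)
  have fW: "finite W" unfolding W_def using fS by simp
  have W1: "cmod w = 1" if "w \<in> W" for w using that phi unfolding W_def by auto
  have Wmult: "x * y \<in> W" if xy: "x \<in> W" "y \<in> W" for x y
  proof -
    obtain g h where g: "g \<in> S" "x = \<phi> g" and h: "h \<in> S" "y = \<phi> h" using xy unfolding W_def by auto
    have gG: "g \<in> G" "h \<in> G" using g h unfolding S_def by auto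
    have "(g ** h) *v z = g *v (y *s z)" using phi[OF h(1)] h(2) by (simp add: matrix_vector_mul_assoc[symmetric])
    also have "\<dots> = y *s (x *s z)" using phi[OF g(1)] g(2) by (simp add: mv_scale)
    also have "\<dots> = (x * y) *s z" by (simp add: vector_smult_assoc mult.commute)
    finally have e: "(g ** h) *v z = (x * y) *s z" .
    have ghG: "g ** h \<in> G" using GS(4) gG by auto
    have "g ** h \<in> S" using inS[OF ghG e] .
    then show ?thesis using phi_eq[OF _ e] unfolding W_def by (metis image_eqI)
  qed
  have Wpow: "w ^ m = 1" if wW: "w \<in> W" for w
  proof -
    have w0: "w \<noteq> 0" using W1[OF wW] by auto
    have injw: "inj_on (\<lambda>x. w * x) W" using w0 by (auto intro: inj_onI)
    have sub: "(\<lambda>x. w * x) ` W \<subseteq> W" using Wmult wW by auto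
    have ci: "card ((\<lambda>x. w * x) ` W) = card W" by (rule card_image[OF injw])
    have img: "(\<lambda>x. w * x) ` W = W" by (rule card_subset_eq[OF fW sub ci])
    have "prod (\<lambda>x. x) W = prod (\<lambda>x. x) ((\<lambda>x. w * x) ` W)" using img by simp
    also have "\<dots> = prod (\<lambda>x. w * x) W" using prod.reindex[OF injw] by (simp add: comp_def)
    also have "\<dots> = prod (\<lambda>x. w) W * prod (\<lambda>x. x) W" by (rule prod.distrib)
    also have "\<dots> = w ^ m * prod (\<lambda>x. x) W" using cW by simp
    finally have e: "prod (\<lambda>x. x) W * 1 = prod (\<lambda>x. x) W * w ^ m" by (simp only: mult.commute mult_1_right mult_1_left)
    have nz: "prod (\<lambda>x. x) W \<noteq> 0"
    proof
      assume "prod (\<lambda>x. x) W = 0"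
      then obtain x where "x \<in> W" "x = 0" using fW by (meson prod_zero_iff)
      then show False using W1 by fastforce
    qed
    show ?thesis using e nz mult_left_cancel[OF nz, of 1 "w ^ m"] by simp
  qed
  show "w ^ card S = 1" if gw: "g \<in> G" "g *v z = w *s z" for g w
  proof -
    have gS: "g \<in> S" by (rule inS[OF gw])
    have "\<phi> g = w" by (rule phi_eq[OF gS gw(2)])
    then have "w \<in> W" unfolding W_def using gS by blast
    then show ?thesis using Wpow unfolding m_def by blast
  qed
  have Wr: "W = {x. x ^ m = 1}"
  proof (rule card_subset_eq)
    show "finite {x::complex. x ^ m = 1}" using mpos by (intro finite_roots_unity) simp
    show "W \<subseteq> {x. x ^ m = 1}" using Wpow by blast
    show "card W = card {x::complex. x ^ m = 1}" using cW card_roots_unity_eq[OF mpos] by simp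
  qed
  have "cis (2 * pi / real m) ^ m = 1"
  proof -
    have "cis (2 * pi / real m) ^ m = cis (real m * (2 * pi / real m))" by (rule Complex.DeMoivre)
    also have "real m * (2 * pi / real m) = 2 * pi" using mpos by simp
    finally show ?thesis by simp
  qed
  then have "cis (2 * pi / real m) \<in> W" unfolding Wr by blast
  then obtain g where g: "g \<in> S" "cis (2 * pi / real m) = \<phi> g" unfolding W_def by blast
  have "g \<in> G" using g(1) unfolding S_def by blast
  moreover have "g *v z = cis (2 * pi / real (card S)) *s z"
    using conjunct2[OF phi[OF g(1)]] g(2) unfolding m_def by simp
  ultimately show "\<exists>g\<in>G. g *v z = cis (2 * pi / real (card S)) *s z" by blast
qed

lemma orbit_mult:
  fixes G :: "(complex^2^2) set" and z :: "complex^2"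
  assumes fsg: "finite_subgroup_SU2 G" and z: "norm z = 1" and c: "c > 0"
  shows "is_m_fold_iterate (\<lambda>t. piG G (cis (t / c) *s z)) (2 * pi * c)
           (card {g\<in>G. \<exists>w. cmod w = 1 \<and> g *v z = w *s z})"
proof -
  define S where "S = {g\<in>G. \<exists>w. cmod w = 1 \<and> g *v z = w *s z}"
  define m where "m = card S"
  note WP = W_props[OF fsg z, folded S_def, folded m_def]
  have GS: "mat 1 \<in> G" using fsg by (auto simp: finite_subgroup_SU2_def)
  have mpos: "m > 0" using WP(1) .
  have mr: "real m > 0" using mpos by simp
  define \<gamma> where "\<gamma> t = piG G (cis (t / c) *s z)" for t
  have per: "\<gamma> (t + 2 * pi * c / real m) = \<gamma> t" for t
  proof -
    obtain g where g: "g \<in> G" "g *v z = cis (2 * pi / real m) *s z" using WP(2) by blast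
    have "(t + 2 * pi * c / real m) / c = t / c + 2 * pi / real m" using c mr by (simp add: field_simps)
    then have "cis ((t + 2 * pi * c / real m) / c) = cis (t / c) * cis (2 * pi / real m)"
      by (simp add: cis_mult)
    also have "\<dots> *s z = g *v (cis (t / c) *s z)"
      by (simp add: mv_scale g(2) vector_smult_assoc)
    finally have "cis ((t + 2 * pi * c / real m) / c) *s z = g *v (cis (t / c) *s z)" .
    then show ?thesis unfolding \<gamma>_def using piG_act[OF fsg g(1)] by simp
  qed
  have inj: "inj_on \<gamma> {0..<2 * pi * c / real m}"
  proof (rule inj_onI)
    fix s t assume s: "s \<in> {0..<2 * pi * c / real m}" and t: "t \<in> {0..<2 * pi * c / real m}"
      and st: "\<gamma> s = \<gamma> t"
    have "cis (s / c) *s z \<in> \<gamma> s" unfolding \<gamma>_def piG_def using GS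
      by (auto intro!: exI[of _ "mat 1"] simp: matrix_vector_mul_lid)
    then have "cis (s / c) *s z \<in> piG G (cis (t / c) *s z)" using st unfolding \<gamma>_def by simp
    then obtain g where g: "g \<in> G" "cis (s / c) *s z = g *v (cis (t / c) *s z)"
      unfolding piG_def by blast
    have "g *v z = cis (- (t / c)) *s (cis (t / c) *s (g *v z))"
      by (simp add: vector_smult_assoc cis_mult)
    also have "\<dots> = cis (- (t / c)) *s (cis (s / c) *s z)" using g(2) by (simp add: mv_scale)
    also have "\<dots> = cis ((s - t) / c) *s z"
      by (simp add: vector_smult_assoc cis_mult diff_divide_distrib)
    finally have "g *v z = cis ((s - t) / c) *s z" .
    then have "cis ((s - t) / c) ^ m = 1" using WP(3) g(1) by blast
    then have "cis (real m * ((s - t) / c)) = 1" by (simp add: Complex.DeMoivre)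
    then have "cos (real m * ((s - t) / c)) = 1" by (metis cis.sel(1) one_complex.sel(1))
    then obtain n :: int where n: "real m * ((s - t) / c) = real_of_int n * 2 * pi"
      using cos_one_2pi_int by blast
    have "\<bar>s - t\<bar> < 2 * pi * c / real m" using s t by auto
    then have "real m * \<bar>s - t\<bar> < 2 * pi * c" using mr by (simp add: field_simps)
    moreover have "\<bar>real m * ((s - t) / c)\<bar> = real m * \<bar>s - t\<bar> / c" using c mr
      by (simp add: abs_mult abs_divide)
    ultimately have "\<bar>real m * ((s - t) / c)\<bar> < 2 * pi" using c
      by (simp add: divide_less_eq)
    then have "\<bar>real_of_int n\<bar> * (2 * pi) < 1 * (2 * pi)" unfolding n by (simp add: abs_mult)
    then have "\<bar>real_of_int n\<bar> < 1" by (rule mult_right_less_imp_less) simp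
    then have "n = 0" by linarith
    then have "real m * ((s - t) / c) = 0" using n by simp
    then show "s = t" using mr c by simp
  qed
  show ?thesis
    unfolding is_m_fold_iterate_def S_def[symmetric] m_def[symmetric]
    using mpos per inj unfolding \<gamma>_def by (simp add: mult.assoc)
qed

theorem lemma3p14:
  fixes G :: "(complex^2^2) set" and f :: "real^3 \<Rightarrow> real" and U :: "(real^3) set"
  assumes "finite_subgroup_SU2 G" and "card G > 1"
    and "open U" and "S2 \<subseteq> U" and "smooth_on U f"
    and "\<forall>h\<in>rotP ` G. \<forall>x\<in>S2. f (h x) = f x"
    and "morse_smale_S2 f"
    and "{p. crit_S2 f p} = Fix (rotP ` G)"
  shows "\<exists>\<epsilon>0>0. \<forall>\<epsilon>. 0 < \<epsilon> \<and> \<epsilon> < \<epsilon>0 \<longrightarrow>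
           (\<forall>p z. crit_S2 f p \<and> z \<in> S3 \<and> hopf z = p \<longrightarrow>
              is_m_fold_iterate (piG G \<circ> gamma_orbit f \<epsilon> z) (2 * pi * (1 + \<epsilon> * f p))
                (if even (card G) then 2 * card (isotropy (rotP ` G) p)
                 else card (isotropy (rotP ` G) p)))"
proof -
  have "ck_on 0 U f" using assms(5) unfolding smooth_on_def by blast
  then have "continuous_on U f" by simp
  then have cont: "continuous_on S2 f" using assms(4) continuous_on_subset by blast
  have S2eq: "S2 = sphere 0 1" by (auto simp: S2_def sphere_def dist_norm)
  have cS2: "compact S2" unfolding S2eq by (rule compact_sphere)
  have "bounded (f ` S2)" by (rule compact_imp_bounded[OF compact_continuous_image[OF cont cS2]])
  then obtain B where B: "\<forall>x\<in>f ` S2. norm x \<le> B" unfolding bounded_iff by blast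
  define B' where "B' = max B 0"
  have B': "\<bar>f x\<bar> \<le> B'" if "x \<in> S2" for x using B that unfolding B'_def by fastforce
  have B'0: "B' \<ge> 0" unfolding B'_def by simp
  show ?thesis
  proof (intro exI[of _ "1 / (B' + 1)"] conjI allI impI)
    show "0 < 1 / (B' + 1)" using B'0 by simp
    fix \<epsilon> p z
    assume e: "0 < \<epsilon> \<and> \<epsilon> < 1 / (B' + 1)" and pz: "crit_S2 f p \<and> z \<in> S3 \<and> hopf z = p"
    have pS2: "p \<in> S2" using pz unfolding crit_S2_def by simp
    have z: "norm z = 1" using pz unfolding S3_def by simp
    have hz: "hopf z = p" using pz by simp
    have "\<epsilon> * (B' + 1) < 1" using e B'0 by (simp add: field_simps)
    moreover have "\<epsilon> * (B' + 1) = \<epsilon> * B' + \<epsilon>" by (simp add: algebra_simps)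
    moreover have "\<epsilon> * \<bar>f p\<bar> \<le> \<epsilon> * B'" using e B'[OF pS2] by (intro mult_left_mono) auto
    moreover have "- (\<epsilon> * f p) \<le> \<epsilon> * \<bar>f p\<bar>"
    proof -
      have "\<bar>\<epsilon> * f p\<bar> = \<epsilon> * \<bar>f p\<bar>" using e by (simp add: abs_mult)
      then show ?thesis using abs_ge_minus_self[of "\<epsilon> * f p"] by simp
    qed
    ultimately have c: "1 + \<epsilon> * f p > 0" using e by linarith
    have eq: "piG G \<circ> gamma_orbit f \<epsilon> z = (\<lambda>t. piG G (cis (t / (1 + \<epsilon> * f p)) *s z))"
      by (auto simp: gamma_orbit_def hz)
    show "is_m_fold_iterate (piG G \<circ> gamma_orbit f \<epsilon> z) (2 * pi * (1 + \<epsilon> * f p))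
                (if even (card G) then 2 * card (isotropy (rotP ` G) p)
                 else card (isotropy (rotP ` G) p))"
      using orbit_mult[OF assms(1) z c] unfolding eq card_S[OF assms(1) z] hz .
  qed
qed

end
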